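(* Let $\alpha\in[0,\pi/2)$ and let $P,C$ be causal stable systems on $\mathcal{L}_{2e+}^n$ with $\theta(P)\le\alpha$ and $\theta(C)\le\alpha$, such that the feedback system $P\#C$ is well-posed. Let $G:e_1\mapsto y_1$ be the closed-loop map of $P\#C|_{e_2=0}$. Then $G$ is stable and $\theta(G)\le\alpha$.
   Context: For $n\ge1$, $\mathcal{L}_2^n$ is the set of measurable $u:\mathbb{R}\to\mathbb{R}^n$ with $\|u\|_2^2=\int|u(t)|^2dt<\infty$, inner product $\langle u,v\rangle=\int u(t)^Tv(t)\,dt$; $\mathcal{L}_{2+}=\{u\in\mathcal{L}_2:u(t)=0\ \text{for}\ t<0\}$. For $T\ge0$, $(\Gamma_Tu)(t)=u(t)$ for $t\le T$, $0$ for $t>T$; $\mathcal{L}_{2e+}=\{u:\Gamma_Tu\in\mathcal{L}_{2+}\ \forall T\ge0\}$. A system is an operator $P:\mathcal{L}_{2e+}\to\mathcal{L}_{2e+}$ with $P0=0$, $P\ne0$; causal if $\Gamma_TP=\Gamma_TP\Gamma_T$ for all $T\ge 0$; a causal system is stable if $Pu\in\mathcal{L}_{2+}$ for all $u\in\mathcal{L}_{2+}$ and $\sup_{0\ne u\in\mathcal{L}_{2+}}\|Pu\|_2/\|u\|_2<\infty$. The singular angle $\theta(P)\in[0,\pi]$ is given by $\cos\theta(P)=\inf\{\langle u,Pu\rangle/(\|u\|_2\|Pu\|_2):0\neq u\in\mathcal{L}_{2+},\ Pu\ne0\}$. The feedback system $P\#C$: $u_1=e_1-y_2$, $u_2=e_2+y_1$,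 $y_1=Pu_1$, $y_2=Cu_2$; it is well-posed if $(u_1,u_2)\mapsto(u_1+Cu_2,\ u_2-Pu_1)$ has a causal inverse on $\mathcal{L}_{2e+}\times\mathcal{L}_{2e+}$. $P\#C|_{e_2=0}$ denotes the loop with $e_2=0$. *)

theory Defs
  imports "HOL-Analysis.Analysis"
begin

type_synonym 'n signal = "real \<Rightarrow> real ^ 'n"
type_synonym 'n system = "'n signal \<Rightarrow> 'n signal"

definition L2 :: "'n::finite signal set" where
  "L2 = {u. u \<in> borel_measurable lborel \<and> integrable lborel (\<lambda>t. (norm (u t))\<^sup>2)}"

definition inner_L2 :: "'n::finite signal \<Rightarrow> 'n signal \<Rightarrow> real" where
  "inner_L2 u v = (\<integral>t. u t \<bullet> v t \<partial>lborel)"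

definition norm_L2 :: "'n::finite signal \<Rightarrow> real" where
  "norm_L2 u = sqrt (\<integral>t. (norm (u t))\<^sup>2 \<partial>lborel)"

definition L2p :: "'n::finite signal set" where
  "L2p = {u. u \<in> L2 \<and> (\<forall>t<0. u t = 0)}"

definition trunc :: "real \<Rightarrow> 'n::finite signal \<Rightarrow> 'n signal" where
  "trunc T u = (\<lambda>t. if t \<le> T then u t else 0)"

definition L2ep :: "'n::finite signal set" where
  "L2ep = {u. \<forall>T\<ge>0. trunc T u \<in> L2p}"

definition is_system :: "'n::finite system \<Rightarrow> bool" where
  "is_system P \<longleftrightarrow> (\<forall>u\<in>L2ep. P u \<in> L2ep) \<and> P (\<lambda>t. 0) = (\<lambda>t. 0) \<and> (\<exists>u\<in>L2ep. P u \<noteq> (\<lambda>t. 0))"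

definition causal :: "'n::finite system \<Rightarrow> bool" where
  "causal P \<longleftrightarrow> (\<forall>T\<ge>0. \<forall>u\<in>L2ep. trunc T (P u) = trunc T (P (trunc T u)))"

definition stable :: "'n::finite system \<Rightarrow> bool" where
  "stable P \<longleftrightarrow> causal P \<and> (\<forall>u\<in>L2p. P u \<in> L2p) \<and>
     (\<exists>K. \<forall>u\<in>L2p. norm_L2 u \<noteq> 0 \<longrightarrow> norm_L2 (P u) / norm_L2 u \<le> K)"

definition singular_angle :: "'n::finite system \<Rightarrow> real" where
  "singular_angle P = arccos (Inf {inner_L2 u (P u) / (norm_L2 u * norm_L2 (P u)) | u.
       u \<in> L2p \<and> norm_L2 u \<noteq> 0 \<and> norm_L2 (P u) \<noteq> 0})"

definition fb_map :: "'n::finite system \<Rightarrow> 'n system \<Rightarrow> 'n signal \<times> 'n signal \<Rightarrow> 'n signal \<times> 'n signal" where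
  "fb_map P C = (\<lambda>(u1, u2). (\<lambda>t. u1 t + C u2 t, \<lambda>t. u2 t - P u1 t))"

definition causal_inverse_fb ::
  "'n::finite system \<Rightarrow> 'n system \<Rightarrow> ('n signal \<times> 'n signal \<Rightarrow> 'n signal \<times> 'n signal) \<Rightarrow> bool" where
  "causal_inverse_fb P C F' \<longleftrightarrow>
     (\<forall>e1\<in>L2ep. \<forall>e2\<in>L2ep. fst (F' (e1, e2)) \<in> L2ep \<and> snd (F' (e1, e2)) \<in> L2ep \<and>
          fb_map P C (F' (e1, e2)) = (e1, e2)) \<and>
     (\<forall>u1\<in>L2ep. \<forall>u2\<in>L2ep. F' (fb_map P C (u1, u2)) = (u1, u2)) \<and>
     (\<forall>T\<ge>0. \<forall>e1\<in>L2ep. \<forall>e2\<in>L2ep.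
          trunc T (fst (F' (e1, e2))) = trunc T (fst (F' (trunc T e1, trunc T e2))) \<and>
          trunc T (snd (F' (e1, e2))) = trunc T (snd (F' (trunc T e1, trunc T e2))))"

definition well_posed :: "'n::finite system \<Rightarrow> 'n system \<Rightarrow> bool" where
  "well_posed P C \<longleftrightarrow> (\<exists>F'. causal_inverse_fb P C F')"

text \<open>Closed-loop map e1 |-> y1 of P#C with e2 = 0, using the (unique on L2e+) causal inverse.\<close>
definition closed_loop_e1_y1 :: "'n::finite system \<Rightarrow> 'n system \<Rightarrow> 'n system" where
  "closed_loop_e1_y1 P C = (\<lambda>e1. P (fst ((SOME F'. causal_inverse_fb P C F') (e1, \<lambda>t. 0))))"

end

theory Submission
  imports Defs
begin


lemma L2D: "u \<in> L2 \<Longrightarrow> u \<in> borel_measurable lborel"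
  "u \<in> L2 \<Longrightarrow> integrable lborel (\<lambda>t. (norm (u t))\<^sup>2)"
  by (auto simp: L2_def)

lemma L2_add:
  assumes "u \<in> L2" "v \<in> L2"
  shows "(\<lambda>t. u t + v t) \<in> L2"
proof -
  have m: "(\<lambda>t. u t + v t) \<in> borel_measurable lborel" using assms by (auto simp: L2_def)
  have i: "integrable lborel (\<lambda>t. 2 * (norm (u t))\<^sup>2 + 2 * (norm (v t))\<^sup>2)"
    using assms by (auto simp: L2_def)
  have "integrable lborel (\<lambda>t. (norm (u t + v t))\<^sup>2)"
  proof (rule Bochner_Integration.integrable_bound[OF i])
    show "(\<lambda>t. (norm (u t + v t))\<^sup>2) \<in> borel_measurable lborel" using m by measurable
    show "AE t in lborel. norm ((norm (u t + v t))\<^sup>2) \<le> norm (2 * (norm (u t))\<^sup>2 + 2 * (norm (v t))\<^sup>2)"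
    proof (intro AE_I2)
      fix t
      have "norm (u t + v t) \<le> norm (u t) + norm (v t)" by (rule norm_triangle_ineq)
      then have "(norm (u t + v t))\<^sup>2 \<le> (norm (u t) + norm (v t))\<^sup>2"
        by (simp add: power_mono)
      also have "\<dots> \<le> 2 * (norm (u t))\<^sup>2 + 2 * (norm (v t))\<^sup>2"
        by (smt (verit) sum_squares_bound power2_sum)
      finally show "norm ((norm (u t + v t))\<^sup>2) \<le> norm (2 * (norm (u t))\<^sup>2 + 2 * (norm (v t))\<^sup>2)"
        by simp
    qed
  qed
  then show ?thesis using m by (simp add: L2_def)
qed

lemma L2_uminus:
  assumes "u \<in> L2" shows "(\<lambda>t. - u t) \<in> L2"
  using assms by (auto simp: L2_def)

lemma L2_diff:
  assumes "u \<in> L2" "v \<in> L2"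
  shows "(\<lambda>t. u t - v t) \<in> L2"
  using L2_add[OF assms(1) L2_uminus[OF assms(2)]] by simp

lemma trunc_meas:
  assumes "u \<in> borel_measurable lborel"
  shows "trunc T u \<in> borel_measurable lborel"
  unfolding trunc_def using assms by measurable

lemma L2_trunc:
  assumes "u \<in> L2" shows "trunc T u \<in> L2"
proof -
  have m: "trunc T u \<in> borel_measurable lborel" using trunc_meas assms by (auto simp: L2_def)
  have "integrable lborel (\<lambda>t. (norm (trunc T u t))\<^sup>2)"
  proof (rule Bochner_Integration.integrable_bound[OF L2D(2)[OF assms]])
    show "(\<lambda>t. (norm (trunc T u t))\<^sup>2) \<in> borel_measurable lborel" using m by measurable
    show "AE t in lborel. norm ((norm (trunc T u t))\<^sup>2) \<le> norm ((norm (u t))\<^sup>2)"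
      by (auto simp: trunc_def)
  qed
  then show ?thesis using m by (simp add: L2_def)
qed

lemma L2_inner_int:
  assumes "u \<in> L2" "v \<in> L2"
  shows "integrable lborel (\<lambda>t. u t \<bullet> v t)"
proof (rule Bochner_Integration.integrable_bound)
  show "integrable lborel (\<lambda>t. (norm (u t))\<^sup>2 + (norm (v t))\<^sup>2)"
    using assms by (auto simp: L2_def)
  show "(\<lambda>t. u t \<bullet> v t) \<in> borel_measurable lborel" using assms by (auto simp: L2_def)
  show "AE t in lborel. norm (u t \<bullet> v t) \<le> norm ((norm (u t))\<^sup>2 + (norm (v t))\<^sup>2)"
  proof (intro AE_I2)
    fix t
    have "\<bar>u t \<bullet> v t\<bar> \<le> norm (u t) * norm (v t)" by (rule Cauchy_Schwarz_ineq2)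
    also have "\<dots> \<le> (norm (u t))\<^sup>2 + (norm (v t))\<^sup>2"
    proof -
      have "2 * norm (u t) * norm (v t) \<le> (norm (u t))\<^sup>2 + (norm (v t))\<^sup>2"
        by (rule sum_squares_bound)
      moreover have "0 \<le> norm (u t) * norm (v t)" by simp
      ultimately show ?thesis by linarith
    qed
    finally show "norm (u t \<bullet> v t) \<le> norm ((norm (u t))\<^sup>2 + (norm (v t))\<^sup>2)" by simp
  qed
qed

lemma inner_L2_commute: "inner_L2 u v = inner_L2 v u"
  by (simp add: inner_L2_def inner_commute)

lemma inner_L2_add_left:
  assumes "u \<in> L2" "v \<in> L2" "w \<in> L2"
  shows "inner_L2 (\<lambda>t. u t + v t) w = inner_L2 u w + inner_L2 v w"
  unfolding inner_L2_def
  by (simp add: inner_add_left Bochner_Integration.integral_add L2_inner_int assms)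

lemma inner_L2_diff_left:
  assumes "u \<in> L2" "v \<in> L2" "w \<in> L2"
  shows "inner_L2 (\<lambda>t. u t - v t) w = inner_L2 u w - inner_L2 v w"
  unfolding inner_L2_def
  by (simp add: inner_diff_left Bochner_Integration.integral_diff L2_inner_int assms)

lemma norm_L2_nonneg: "norm_L2 u \<ge> 0"
  by (simp add: norm_L2_def)

lemma norm_L2_sq:
  assumes "u \<in> L2" shows "(norm_L2 u)\<^sup>2 = inner_L2 u u"
proof -
  have "(\<integral>t. (norm (u t))\<^sup>2 \<partial>lborel) \<ge> 0" by simp
  then show ?thesis
    by (simp add: norm_L2_def inner_L2_def power2_norm_eq_inner)
qed

lemma L2_CS:
  assumes "u \<in> L2" "v \<in> L2"
  shows "\<bar>inner_L2 u v\<bar> \<le> norm_L2 u * norm_L2 v"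
proof -
  define A where "A = (\<integral>t. (norm (u t))\<^sup>2 \<partial>lborel)"
  define B where "B = (\<integral>t. (norm (v t))\<^sup>2 \<partial>lborel)"
  define I where "I = (\<integral>t. \<bar>u t \<bullet> v t\<bar> \<partial>lborel)"
  have A0: "A \<ge> 0" and B0: "B \<ge> 0" and I0: "I \<ge> 0" by (simp_all add: A_def B_def I_def)
  have iI: "integrable lborel (\<lambda>t. \<bar>u t \<bullet> v t\<bar>)"
    using L2_inner_int[OF assms] by simp
  have key: "2 * a * b * I \<le> a\<^sup>2 * A + b\<^sup>2 * B" if "a \<ge> 0" "b \<ge> 0" for a b
  proof -
    have "(\<integral>t. 2 * a * b * \<bar>u t \<bullet> v t\<bar> \<partial>lborel) \<le> (\<integral>t. a\<^sup>2 * (norm (u t))\<^sup>2 + b\<^sup>2 * (norm (v t))\<^sup>2 \<partial>lborel)"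
    proof (rule integral_mono)
      show "integrable lborel (\<lambda>t. 2 * a * b * \<bar>u t \<bullet> v t\<bar>)" using iI by simp
      show "integrable lborel (\<lambda>t. a\<^sup>2 * (norm (u t))\<^sup>2 + b\<^sup>2 * (norm (v t))\<^sup>2)"
        using assms by (auto simp: L2_def)
      fix t
      have "\<bar>u t \<bullet> v t\<bar> \<le> norm (u t) * norm (v t)" by (rule Cauchy_Schwarz_ineq2)
      then have "2 * a * b * \<bar>u t \<bullet> v t\<bar> \<le> 2 * (a * norm (u t)) * (b * norm (v t))"
        using that by (simp add: mult_left_mono mult.assoc mult.left_commute)
      also have "\<dots> \<le> (a * norm (u t))\<^sup>2 + (b * norm (v t))\<^sup>2"
        by (rule sum_squares_bound)
      finally show "2 * a * b * \<bar>u t \<bullet> v t\<bar> \<le> a\<^sup>2 * (norm (u t))\<^sup>2 + b\<^sup>2 * (norm (v t))\<^sup>2"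
        by (simp add: power_mult_distrib)
    qed
    then show ?thesis
      using assms iI by (simp add: A_def B_def I_def Bochner_Integration.integral_add L2_def)
  qed
  have IAB: "I \<le> sqrt A * sqrt B"
  proof (cases "A = 0 \<or> B = 0")
    case True
    show ?thesis
    proof (rule ccontr)
      assume "\<not> ?thesis"
      then have Ip: "I > 0" using True by auto
      show False
      proof (cases "A = 0")
        case True
        define b where "b = I / (B + 1)"
        have bp: "b > 0" using Ip B0 by (simp add: b_def)
        have "2 * 1 * b * I \<le> 1\<^sup>2 * A + b\<^sup>2 * B" using key[of 1 b] bp by simp
        then have "2 * b * I \<le> b * (b * B)" using True by (simp add: power2_eq_square)
        then have "2 * I \<le> b * B" using bp by simp
        moreover have "b * B < I" using Ip B0 by (simp add: b_def field_simps)
        ultimately show False using Ip by linarith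
      next
        case False
        then have B: "B = 0" using True by auto
        define a where "a = I / (A + 1)"
        have ap: "a > 0" using Ip A0 by (simp add: a_def)
        have "2 * a * 1 * I \<le> a\<^sup>2 * A + 1\<^sup>2 * B" using key[of a 1] ap by simp
        then have "2 * a * I \<le> a * (a * A)" using B by (simp add: power2_eq_square)
        then have "2 * I \<le> a * A" using ap by simp
        moreover have "a * A < I" using Ip A0 by (simp add: a_def field_simps)
        ultimately show False using Ip by linarith
      qed
    qed
  next
    case False
    then have Ap: "A > 0" and Bp: "B > 0" using A0 B0 by auto
    have "2 * sqrt B * sqrt A * I \<le> (sqrt B)\<^sup>2 * A + (sqrt A)\<^sup>2 * B"
      by (rule key) (simp_all add: A0 B0)
    also have "\<dots> = B * A + A * B" using A0 B0 by simp
    also have "\<dots> = 2 * (sqrt A * sqrt A) * (sqrt B * sqrt B)"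
      using A0 B0 by simp
    also have "\<dots> = 2 * (sqrt A * sqrt B) * (sqrt A * sqrt B)" by (simp add: ac_simps)
    finally have "(sqrt A * sqrt B) * I \<le> (sqrt A * sqrt B) * (sqrt A * sqrt B)"
      by (simp add: mult.commute mult.left_commute)
    moreover have "sqrt A * sqrt B > 0" using Ap Bp by simp
    ultimately show ?thesis by (meson mult_le_cancel_left_pos)
  qed
  have "\<bar>inner_L2 u v\<bar> \<le> I"
    unfolding inner_L2_def I_def by (rule integral_abs_bound)
  also have "\<dots> \<le> norm_L2 u * norm_L2 v" using IAB by (simp add: norm_L2_def A_def B_def)
  finally show ?thesis .
qed

lemma inner_L2_trunc: "inner_L2 (trunc T u) v = inner_L2 (trunc T u) (trunc T v)"
  unfolding inner_L2_def by (rule arg_cong[where f="integral\<^sup>L lborel"]) (auto simp: trunc_def)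

lemma norm_L2_trunc_le:
  assumes "u \<in> L2" shows "norm_L2 (trunc T u) \<le> norm_L2 u"
  unfolding norm_L2_def
proof (rule real_sqrt_le_mono, rule integral_mono)
  show "integrable lborel (\<lambda>t. (norm (trunc T u t))\<^sup>2)" using L2_trunc[OF assms] by (simp add: L2_def)
  show "integrable lborel (\<lambda>t. (norm (u t))\<^sup>2)" using assms by (simp add: L2_def)
  show "(norm (trunc T u t))\<^sup>2 \<le> (norm (u t))\<^sup>2" for t by (simp add: trunc_def)
qed

lemma trunc_trunc: "trunc T (trunc T u) = trunc T u"
  by (auto simp: trunc_def)

lemma L2p_L2: "u \<in> L2p \<Longrightarrow> u \<in> L2" by (simp add: L2p_def)

lemma L2p_add: "u \<in> L2p \<Longrightarrow> v \<in> L2p \<Longrightarrow> (\<lambda>t. u t + v t) \<in> L2p"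
  by (simp add: L2p_def L2_add)

lemma L2p_diff: "u \<in> L2p \<Longrightarrow> v \<in> L2p \<Longrightarrow> (\<lambda>t. u t - v t) \<in> L2p"
  by (simp add: L2p_def L2_diff)

lemma L2p_trunc: "u \<in> L2p \<Longrightarrow> trunc T u \<in> L2p"
  by (simp add: L2p_def L2_trunc) (simp add: trunc_def)

lemma L2p_L2ep: "u \<in> L2p \<Longrightarrow> u \<in> L2ep"
  by (simp add: L2ep_def L2p_trunc)

lemma L2ep_trunc: "u \<in> L2ep \<Longrightarrow> T \<ge> 0 \<Longrightarrow> trunc T u \<in> L2p"
  by (simp add: L2ep_def)

lemma zero_L2p: "(\<lambda>t. 0) \<in> L2p"
  by (simp add: L2p_def L2_def)

lemma trunc_zero: "trunc T (\<lambda>t. 0) = (\<lambda>t. 0)"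
  by (auto simp: trunc_def)

lemma L2ep_complete:
  assumes u: "u \<in> L2ep" and bnd: "\<And>T. T \<ge> 0 \<Longrightarrow> norm_L2 (trunc T u) \<le> B"
  shows "u \<in> L2p \<and> norm_L2 u \<le> B"
proof -
  have tL2: "trunc (real n) u \<in> L2" for n using L2ep_trunc[OF u] by (simp add: L2p_def)
  have B0: "B \<ge> 0" using bnd[of 0] norm_L2_nonneg[of "trunc 0 u"] by simp
  define f where "f n t = (norm (trunc (real n) u t))\<^sup>2" for n t
  have fi: "integrable lborel (f n)" for n using tL2[of n] unfolding L2_def f_def by blast
  have fmono: "f n t \<le> f m t" if "n \<le> m" for n m t
    using that by (auto simp: f_def trunc_def)
  have ev: "\<forall>\<^sub>F n in sequentially. trunc (real n) u t = u t" for t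
  proof -
    obtain N :: nat where "t \<le> real N" using real_arch_simple by blast
    then show ?thesis by (auto simp: eventually_sequentially trunc_def intro!: exI[of _ N])
  qed
  have meas: "u \<in> borel_measurable lborel"
  proof (rule borel_measurable_LIMSEQ_metric)
    show "trunc (real i) u \<in> borel_measurable lborel" for i using tL2[of i] by (simp add: L2_def)
    show "(\<lambda>i. trunc (real i) u t) \<longlonglongrightarrow> u t" for t
      using ev[of t] by (simp add: tendsto_eventually)
  qed
  define x where "x = (SUP n. integral\<^sup>L lborel (f n))"
  have incs: "incseq (\<lambda>n. integral\<^sup>L lborel (f n))"
    by (auto simp: incseq_def intro!: integral_mono fi fmono)
  have fb: "integral\<^sup>L lborel (f n) \<le> B\<^sup>2" for n
  proof -
    have "sqrt (integral\<^sup>L lborel (f n)) \<le> B" using bnd[of "real n"] unfolding norm_L2_def f_def by simp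
    then have "(sqrt (integral\<^sup>L lborel (f n)))\<^sup>2 \<le> B\<^sup>2" by (rule power_mono) (simp_all add: f_def)
    moreover have "integral\<^sup>L lborel (f n) \<ge> 0" by (simp add: f_def)
    ultimately show ?thesis by simp
  qed
  have bdd: "bdd_above (range (\<lambda>n. integral\<^sup>L lborel (f n)))"
    using fb by (intro bdd_aboveI[where M="B\<^sup>2"]) auto
  have lim: "(\<lambda>n. integral\<^sup>L lborel (f n)) \<longlonglongrightarrow> x"
    unfolding x_def using LIMSEQ_incseq_SUP[OF bdd incs] .
  have xB: "x \<le> B\<^sup>2" unfolding x_def by (rule cSUP_least) (auto simp: fb)
  have um: "(\<lambda>t. (norm (u t))\<^sup>2) \<in> borel_measurable lborel" using meas by measurable
  have ptw: "(\<lambda>n. f n t) \<longlonglongrightarrow> (norm (u t))\<^sup>2" for t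
  proof -
    have "\<forall>\<^sub>F n in sequentially. f n t = (norm (u t))\<^sup>2"
      using ev[of t] by (rule eventually_mono) (simp add: f_def)
    then show ?thesis by (rule tendsto_eventually)
  qed
  have mo: "mono (\<lambda>n. f n t)" for t by (auto simp: mono_def intro: fmono)
  have ui: "integrable lborel (\<lambda>t. (norm (u t))\<^sup>2)"
    and uv: "(\<integral>t. (norm (u t))\<^sup>2 \<partial>lborel) = x"
  proof -
    have mo': "AE t in lborel. mono (\<lambda>n. f n t)" using mo by simp
    have lim': "AE t in lborel. (\<lambda>n. f n t) \<longlonglongrightarrow> (norm (u t))\<^sup>2" using ptw by simp
    show "integrable lborel (\<lambda>t. (norm (u t))\<^sup>2)"
      by (rule integrable_monotone_convergence[OF fi mo' lim' lim um])
    show "(\<integral>t. (norm (u t))\<^sup>2 \<partial>lborel) = x"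
      by (rule integral_monotone_convergence[OF fi mo' lim' lim um])
  qed
  have neg: "\<forall>t<0. u t = 0"
  proof (intro allI impI)
    fix t :: real assume "t < 0"
    moreover have "trunc 0 u \<in> L2p" using L2ep_trunc[OF u] by simp
    ultimately have "trunc 0 u t = 0" by (simp add: L2p_def)
    then show "u t = 0" using \<open>t < 0\<close> by (simp add: trunc_def)
  qed
  have "norm_L2 u \<le> sqrt (B\<^sup>2)" unfolding norm_L2_def uv using xB by (rule real_sqrt_le_mono)
  then show ?thesis using B0 meas ui neg by (simp add: L2p_def L2_def)
qed



lemma ratio_le1:
  assumes "u \<in> L2" "w \<in> L2" "norm_L2 u \<noteq> 0" "norm_L2 w \<noteq> 0"
  shows "\<bar>inner_L2 u w / (norm_L2 u * norm_L2 w)\<bar> \<le> 1"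
proof -
  have p: "norm_L2 u * norm_L2 w > 0"
    using assms(3,4) norm_L2_nonneg[of u] norm_L2_nonneg[of w] by (simp add: less_le)
  have "\<bar>inner_L2 u w\<bar> \<le> norm_L2 u * norm_L2 w" by (rule L2_CS[OF assms(1,2)])
  moreover have "\<bar>inner_L2 u w / (norm_L2 u * norm_L2 w)\<bar> = \<bar>inner_L2 u w\<bar> / (norm_L2 u * norm_L2 w)"
    using p abs_divide abs_of_pos by metis
  ultimately show ?thesis using p by (simp only: divide_le_eq_1_pos)
qed

lemma L2_norm_add_le:
  assumes "u \<in> L2" "v \<in> L2"
  shows "norm_L2 (\<lambda>t. u t + v t) \<le> norm_L2 u + norm_L2 v"
proof -
  have s: "(\<lambda>t. u t + v t) \<in> L2" using L2_add assms by blast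
  have "(norm_L2 (\<lambda>t. u t + v t))\<^sup>2 = inner_L2 u u + 2 * inner_L2 u v + inner_L2 v v"
  proof -
    have "(norm_L2 (\<lambda>t. u t + v t))\<^sup>2 = inner_L2 u (\<lambda>t. u t + v t) + inner_L2 v (\<lambda>t. u t + v t)"
      using assms s by (simp add: norm_L2_sq inner_L2_add_left)
    also have "inner_L2 u (\<lambda>t. u t + v t) = inner_L2 u u + inner_L2 v u"
      by (subst inner_L2_commute) (simp add: inner_L2_add_left assms)
    also have "inner_L2 v (\<lambda>t. u t + v t) = inner_L2 u v + inner_L2 v v"
      by (subst inner_L2_commute) (simp add: inner_L2_add_left assms)
    finally show ?thesis using inner_L2_commute[of v u] by simp
  qed
  also have "\<dots> \<le> (norm_L2 u)\<^sup>2 + 2 * (norm_L2 u * norm_L2 v) + (norm_L2 v)\<^sup>2"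
    using L2_CS[OF assms] norm_L2_sq[OF assms(1)] norm_L2_sq[OF assms(2)] by linarith
  also have "\<dots> = (norm_L2 u + norm_L2 v)\<^sup>2" by (simp only: power2_sum mult.assoc)
  finally have "(norm_L2 (\<lambda>t. u t + v t))\<^sup>2 \<le> (norm_L2 u + norm_L2 v)\<^sup>2" .
  then show ?thesis
    by (rule power2_le_imp_le) (simp add: norm_L2_nonneg add_nonneg_nonneg)
qed

lemma angle_ineq:
  assumes st: "stable S" and sa: "singular_angle S \<le> \<alpha>" and a0: "0 \<le> \<alpha>" and ap: "\<alpha> \<le> pi"
    and v: "v \<in> L2p"
  shows "inner_L2 v (S v) \<ge> cos \<alpha> * norm_L2 v * norm_L2 (S v)"
proof -
  have Sv: "S v \<in> L2p" using st v by (simp add: stable_def)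
  have vL: "v \<in> L2" and SvL: "S v \<in> L2" using v Sv by (simp_all add: L2p_def)
  define X where "X = {inner_L2 u (S u) / (norm_L2 u * norm_L2 (S u)) | u.
       u \<in> L2p \<and> norm_L2 u \<noteq> 0 \<and> norm_L2 (S u) \<noteq> 0}"
  have Xb: "\<bar>x\<bar> \<le> 1" if xX: "x \<in> X" for x
  proof -
    obtain u where x: "x = inner_L2 u (S u) / (norm_L2 u * norm_L2 (S u))" and u: "u \<in> L2p"
      and n1: "norm_L2 u \<noteq> 0" and n2: "norm_L2 (S u) \<noteq> 0"
      using xX unfolding X_def by blast
    have "S u \<in> L2p" using st u unfolding stable_def by blast
    then show ?thesis unfolding x using u n1 n2 L2p_L2 ratio_le1 by blast
  qed
  show ?thesis
  proof (cases "norm_L2 v = 0 \<or> norm_L2 (S v) = 0")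
    case True
    have "\<bar>inner_L2 v (S v)\<bar> \<le> norm_L2 v * norm_L2 (S v)" using L2_CS vL SvL by blast
    then show ?thesis using True by auto
  next
    case False
    define r where "r = inner_L2 v (S v) / (norm_L2 v * norm_L2 (S v))"
    have rX: "r \<in> X" using False v unfolding X_def r_def by blast
    have bdd: "bdd_below X" using Xb by (intro bdd_belowI[where m="-1"]) (auto simp: abs_le_iff)
    have Ir: "Inf X \<le> r" using rX bdd by (rule cInf_lower)
    have I1: "Inf X \<ge> -1" using rX Xb by (intro cInf_greatest) (auto simp: abs_le_iff)
    have I2: "Inf X \<le> 1" using Ir Xb[OF rX] by (simp add: abs_le_iff)
    have "arccos (Inf X) \<le> \<alpha>" using sa unfolding singular_angle_def X_def .
    then have "cos \<alpha> \<le> cos (arccos (Inf X))"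
      using arccos_lbound[OF I1 I2] ap by (intro cos_monotone_0_pi_le) auto
    then have "cos \<alpha> \<le> r" using Ir I1 I2 by simp
    moreover have p: "norm_L2 v * norm_L2 (S v) > 0"
      using False norm_L2_nonneg[of v] norm_L2_nonneg[of "S v"] by simp
    ultimately show ?thesis by (simp add: r_def pos_le_divide_eq mult.assoc)
  qed
qed

lemma angle_trunc:
  assumes st: "stable S" and c0: "c \<ge> 0"
    and ang: "\<And>v. v \<in> L2p \<Longrightarrow> inner_L2 v (S v) \<ge> c * norm_L2 v * norm_L2 (S v)"
    and u: "u \<in> L2ep" and T: "T \<ge> 0"
  shows "inner_L2 (trunc T u) (trunc T (S u)) \<ge> c * norm_L2 (trunc T u) * norm_L2 (trunc T (S u))"
proof -
  define v where "v = trunc T u"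
  have v: "v \<in> L2p" using L2ep_trunc[OF u T] by (simp add: v_def)
  have Sv: "S v \<in> L2p" using st v by (simp add: stable_def)
  have eq: "trunc T (S u) = trunc T (S v)" using st u T by (simp add: stable_def causal_def v_def)
  have "inner_L2 v (trunc T (S v)) = inner_L2 v (S v)"
    using inner_L2_trunc[of T u "S v"] unfolding v_def by simp
  moreover have "norm_L2 (trunc T (S v)) \<le> norm_L2 (S v)" using Sv by (simp add: norm_L2_trunc_le L2p_def)
  ultimately have "inner_L2 v (trunc T (S v)) \<ge> c * norm_L2 v * norm_L2 (trunc T (S v))"
  proof -
    have "c * norm_L2 v \<ge> 0" using c0 norm_L2_nonneg[of v] by simp
    then have "c * norm_L2 v * norm_L2 (trunc T (S v)) \<le> c * norm_L2 v * norm_L2 (S v)"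
      using \<open>norm_L2 (trunc T (S v)) \<le> norm_L2 (S v)\<close> by (simp add: mult_left_mono)
    then show ?thesis using ang[OF v] \<open>inner_L2 v (trunc T (S v)) = inner_L2 v (S v)\<close> by linarith
  qed
  then show ?thesis using eq by (simp add: v_def)
qed

lemma L2_norm_add_sq:
  assumes "u \<in> L2" "v \<in> L2"
  shows "(norm_L2 (\<lambda>t. u t + v t))\<^sup>2 = (norm_L2 u)\<^sup>2 + 2 * inner_L2 u v + (norm_L2 v)\<^sup>2"
proof -
  have s: "(\<lambda>t. u t + v t) \<in> L2" using L2_add assms by blast
  have "(norm_L2 (\<lambda>t. u t + v t))\<^sup>2 = inner_L2 u (\<lambda>t. u t + v t) + inner_L2 v (\<lambda>t. u t + v t)"
    using assms s by (simp add: norm_L2_sq inner_L2_add_left)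
  also have "inner_L2 u (\<lambda>t. u t + v t) = inner_L2 u u + inner_L2 v u"
    by (subst inner_L2_commute) (simp add: inner_L2_add_left assms)
  also have "inner_L2 v (\<lambda>t. u t + v t) = inner_L2 u v + inner_L2 v v"
    by (subst inner_L2_commute) (simp add: inner_L2_add_left assms)
  finally show ?thesis using inner_L2_commute[of v u] norm_L2_sq[OF assms(1)] norm_L2_sq[OF assms(2)]
    by simp
qed

lemma bump_L2p:
  fixes e :: "real ^ 'n::finite"
  assumes T: "T \<ge> 0" and h: "h > 0" and e: "norm e = 1"
  shows "(\<lambda>t. indicator {T<..T+h} t *\<^sub>R e) \<in> L2p \<and> norm_L2 (\<lambda>t. indicator {T<..T+h} t *\<^sub>R e) = sqrt h"
proof -
  define z where "z = (\<lambda>t. indicator {T<..T+h} t *\<^sub>R e)"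
  have zn: "(\<lambda>t. (norm (z t))\<^sup>2) = indicator {T<..T+h}"
    by (rule ext) (simp add: z_def e indicator_def)
  have zm: "z \<in> borel_measurable lborel" unfolding z_def by measurable
  have zi: "integrable lborel (\<lambda>t. (norm (z t))\<^sup>2)" unfolding zn
    by (rule integrable_real_indicator) (use h in \<open>auto simp: emeasure_lborel_Ioc\<close>)
  have z0: "\<forall>t<0. z t = 0" using T by (auto simp: z_def indicator_def)
  have "norm_L2 z = sqrt h" unfolding norm_L2_def zn using h by simp
  then show ?thesis using zm zi z0 by (simp add: z_def L2p_def L2_def)
qed

lemma stable_null:
  fixes S :: "'n::finite system"
  assumes st: "stable S" and v: "v \<in> L2p" and n0: "norm_L2 v = 0" and T: "T \<ge> 0"
  shows "norm_L2 (trunc T (S v)) = 0"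
proof -
  obtain K where K: "\<And>u. u \<in> L2p \<Longrightarrow> norm_L2 u \<noteq> 0 \<Longrightarrow> norm_L2 (S u) / norm_L2 u \<le> K"
    using st unfolding stable_def by blast
  define e :: "real ^ 'n" where "e = axis undefined 1"
  have e1: "norm e = 1" by (simp add: e_def)
  define N where "N = norm_L2 (trunc T (S v))"
  have N0: "N \<ge> 0" by (simp add: N_def norm_L2_nonneg)
  have bound: "N \<le> K * sqrt h" if h: "h > 0" for h
  proof -
    define z where "z = (\<lambda>t. indicator {T<..T+h} t *\<^sub>R e)"
    have z: "z \<in> L2p" and zn: "norm_L2 z = sqrt h" using bump_L2p[OF T h e1] by (simp_all add: z_def)
    define w where "w = (\<lambda>t. v t + z t)"
    have w: "w \<in> L2p" unfolding w_def using v z by (rule L2p_add)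
    have "\<bar>inner_L2 v z\<bar> \<le> norm_L2 v * norm_L2 z" using v z L2p_L2 L2_CS by blast
    then have vz: "inner_L2 v z = 0" using n0 by simp
    have "(norm_L2 w)\<^sup>2 = (norm_L2 z)\<^sup>2"
      unfolding w_def using L2_norm_add_sq[OF L2p_L2[OF v] L2p_L2[OF z]] vz n0 by simp
    then have wn: "norm_L2 w = sqrt h" using zn norm_L2_nonneg[of w] norm_L2_nonneg[of z]
      by (metis power2_eq_iff_nonneg)
    have tw: "trunc T w = trunc T v"
      by (rule ext) (simp add: trunc_def w_def z_def indicator_def)
    have "trunc T (S v) = trunc T (S (trunc T v))"
      using st v T L2p_L2ep unfolding stable_def causal_def by blast
    also have "\<dots> = trunc T (S (trunc T w))" by (simp add: tw)
    also have "\<dots> = trunc T (S w)"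
      using st w T L2p_L2ep unfolding stable_def causal_def by metis
    finally have eq: "trunc T (S v) = trunc T (S w)" .
    have Sw: "S w \<in> L2p" using st w unfolding stable_def by blast
    have "N \<le> norm_L2 (S w)" unfolding N_def eq using Sw L2p_L2 norm_L2_trunc_le by blast
    moreover have "norm_L2 (S w) / norm_L2 w \<le> K" using K[OF w] wn h by simp
    then have "norm_L2 (S w) \<le> K * sqrt h" using wn h by (simp add: divide_le_eq)
    ultimately show ?thesis by linarith
  qed
  show ?thesis
  proof (rule ccontr)
    assume "norm_L2 (trunc T (S v)) \<noteq> 0"
    then have Np: "N > 0" using N0 N_def by simp
    have "K > 0" using bound[of 1] Np by simp
    define h where "h = (N / (2 * K))\<^sup>2"
    have hp: "h > 0" using Np \<open>K > 0\<close> by (simp add: h_def)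
    have "sqrt h = N / (2 * K)" using Np \<open>K > 0\<close> by (simp add: h_def)
    then have "K * sqrt h = N / 2" using \<open>K > 0\<close> by simp
    then show False using bound[OF hp] Np by linarith
  qed
qed

lemma stable_bound:
  fixes S :: "'n::finite system"
  assumes st: "stable S"
  shows "\<exists>K\<ge>0. (\<forall>u\<in>L2ep. \<forall>T\<ge>0. norm_L2 (trunc T (S u)) \<le> K * norm_L2 (trunc T u))
             \<and> (\<forall>u\<in>L2p. norm_L2 (S u) \<le> K * norm_L2 u)"
proof -
  obtain K0 where K0: "\<And>u. u \<in> L2p \<Longrightarrow> norm_L2 u \<noteq> 0 \<Longrightarrow> norm_L2 (S u) / norm_L2 u \<le> K0"
    using st unfolding stable_def by blast
  define K where "K = max K0 0"
  have K0': "K \<ge> 0" by (simp add: K_def)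
  have p1: "norm_L2 (trunc T (S u)) \<le> K * norm_L2 (trunc T u)" if u: "u \<in> L2ep" and T: "T \<ge> 0" for u T
  proof -
    define v where "v = trunc T u"
    have v: "v \<in> L2p" using L2ep_trunc[OF u T] by (simp add: v_def)
    have eq: "trunc T (S u) = trunc T (S v)" using st u T unfolding stable_def causal_def v_def by blast
    show ?thesis
    proof (cases "norm_L2 v = 0")
      case True
      then show ?thesis using stable_null[OF st v True T] eq by (simp add: v_def)
    next
      case False
      have Sv: "S v \<in> L2p" using st v unfolding stable_def by blast
      have "norm_L2 (trunc T (S v)) \<le> norm_L2 (S v)" using Sv L2p_L2 norm_L2_trunc_le by blast
      moreover have "norm_L2 (S v) / norm_L2 v \<le> K0" using K0[OF v False] .
      then have "norm_L2 (S v) \<le> K0 * norm_L2 v"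
        using False norm_L2_nonneg[of v] by (simp add: divide_le_eq)
      moreover have "K0 * norm_L2 v \<le> K * norm_L2 v"
        using norm_L2_nonneg[of v] by (simp add: K_def mult_right_mono)
      ultimately show ?thesis using eq by (simp add: v_def)
    qed
  qed
  have p2: "norm_L2 (S u) \<le> K * norm_L2 u" if u: "u \<in> L2p" for u
  proof -
    have Su: "S u \<in> L2ep" using st u L2p_L2ep unfolding stable_def by blast
    have "norm_L2 (trunc T (S u)) \<le> K * norm_L2 u" if T: "T \<ge> 0" for T
    proof -
      have "norm_L2 (trunc T (S u)) \<le> K * norm_L2 (trunc T u)" using p1[OF L2p_L2ep[OF u] T] .
      also have "\<dots> \<le> K * norm_L2 u" using norm_L2_trunc_le[OF L2p_L2[OF u]] K0' by (simp add: mult_left_mono)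
      finally show ?thesis .
    qed
    then show ?thesis using L2ep_complete[OF Su] by blast
  qed
  show ?thesis using K0' p1 p2 by blast
qed

theorem proposition6:
  fixes P C :: "'n::finite system" and \<alpha> :: real
  assumes "0 \<le> \<alpha>" "\<alpha> < pi / 2"
    and "is_system P" "is_system C" "stable P" "stable C"
    and "singular_angle P \<le> \<alpha>" "singular_angle C \<le> \<alpha>"
    and "well_posed P C"
  shows "stable (closed_loop_e1_y1 P C) \<and> singular_angle (closed_loop_e1_y1 P C) \<le> \<alpha>"
proof -
  note a0 = assms(1) and a1 = assms(2) and sysP = assms(3) and sysC = assms(4)
    and stP = assms(5) and stC = assms(6) and saP = assms(7) and saC = assms(8) and wp = assms(9)
  define c where "c = cos \<alpha>"
  have c0: "c > 0" unfolding c_def using a0 a1 by (intro cos_gt_zero_pi) auto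
  have api: "\<alpha> \<le> pi" using a1 pi_gt_zero by linarith
  have AP: "inner_L2 v (P v) \<ge> c * norm_L2 v * norm_L2 (P v)" if "v \<in> L2p" for v :: "'n signal"
    unfolding c_def using angle_ineq[OF stP saP a0 api that] .
  have AC: "inner_L2 v (C v) \<ge> c * norm_L2 v * norm_L2 (C v)" if "v \<in> L2p" for v :: "'n signal"
    unfolding c_def using angle_ineq[OF stC saC a0 api that] .
  obtain KP where KP0: "KP \<ge> 0"
    and KP1: "\<And>u T. u \<in> L2ep \<Longrightarrow> T \<ge> 0 \<Longrightarrow> norm_L2 (trunc T (P u)) \<le> KP * norm_L2 (trunc T u)"
    and KP2: "\<And>u. u \<in> L2p \<Longrightarrow> norm_L2 (P u) \<le> KP * norm_L2 u"
    using stable_bound[OF stP] by blast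
  define F where "F = (SOME F'. causal_inverse_fb P C F')"
  have F: "causal_inverse_fb P C F"
    using wp unfolding well_posed_def F_def by (rule someI_ex)
  define G where "G = closed_loop_e1_y1 P C"
  have Gdef: "G e = P (fst (F (e, \<lambda>t. 0)))" for e
    by (simp add: G_def closed_loop_e1_y1_def F_def)
  have z0: "(\<lambda>t. 0) \<in> L2ep" using zero_L2p L2p_L2ep by blast
  have loop: "fst (F (e, \<lambda>t. 0)) \<in> L2ep \<and> e = (\<lambda>t. fst (F (e, \<lambda>t. 0)) t + C (P (fst (F (e, \<lambda>t. 0)))) t)"
    if e: "e \<in> L2ep" for e :: "'n signal"
  proof -
    obtain a b where ab: "F (e, \<lambda>t. 0) = (a, b)" by fastforce
    have "a \<in> L2ep" and fb: "fb_map P C (a, b) = (e, \<lambda>t. 0)"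
      using F e z0 ab unfolding causal_inverse_fb_def by (metis fst_conv snd_conv)+
    from fb have e1: "(\<lambda>t. a t + C b t) = e" and e2: "(\<lambda>t. b t - P a t) = (\<lambda>t. 0)"
      by (simp_all add: fb_map_def)
    have "b = P a"
    proof
      fix t show "b t = P a t" using fun_cong[OF e2, of t] by simp
    qed
    then show ?thesis using \<open>a \<in> L2ep\<close> e1 ab by auto
  qed
  have sysPe: "P u \<in> L2ep" if "u \<in> L2ep" for u :: "'n signal" using sysP that unfolding is_system_def by blast
  have sysCe: "C u \<in> L2ep" if "u \<in> L2ep" for u :: "'n signal" using sysC that unfolding is_system_def by blast
  define K1 where "K1 = KP / c"
  have K10: "K1 \<ge> 0" using KP0 c0 by (simp add: K1_def)
  have key: "norm_L2 (trunc T (G e)) \<le> K1 * norm_L2 (trunc T e)" if e: "e \<in> L2ep" and T: "T \<ge> 0" for e :: "'n signal" and T :: real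
  proof -
    define u1 where "u1 = fst (F (e, \<lambda>t. 0))"
    have u1: "u1 \<in> L2ep" and eu: "e = (\<lambda>t. u1 t + C (P u1) t)" using loop[OF e] by (simp_all add: u1_def)
    define y1 where "y1 = P u1"
    have y1: "y1 \<in> L2ep" using sysPe[OF u1] by (simp add: y1_def)
    have Cy1: "C y1 \<in> L2ep" using sysCe[OF y1] .
    define a where "a = trunc T u1"
    define b where "b = trunc T y1"
    define d where "d = trunc T (C y1)"
    have a: "a \<in> L2" and b: "b \<in> L2" and d: "d \<in> L2"
      using L2ep_trunc[OF u1 T] L2ep_trunc[OF y1 T] L2ep_trunc[OF Cy1 T]
      by (simp_all add: a_def b_def d_def L2p_def)
    have te: "trunc T e = (\<lambda>t. a t + d t)"
      by (subst eu) (auto simp: trunc_def a_def d_def y1_def)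
    have Ge: "G e = y1" by (simp add: Gdef y1_def u1_def)
    have ab: "inner_L2 a b \<ge> c * norm_L2 a * norm_L2 b"
      unfolding a_def b_def y1_def using angle_trunc[OF stP less_imp_le[OF c0] AP u1 T] .
    have bd: "inner_L2 b d \<ge> c * norm_L2 b * norm_L2 d"
      unfolding b_def d_def using angle_trunc[OF stC less_imp_le[OF c0] AC y1 T] .
    have bK: "norm_L2 b \<le> KP * norm_L2 a" unfolding a_def b_def y1_def using KP1[OF u1 T] .
    have ad: "(\<lambda>t. a t + d t) \<in> L2" using L2_add[OF a d] .
    have "inner_L2 (\<lambda>t. a t + d t) b = inner_L2 a b + inner_L2 b d"
      using inner_L2_add_left[OF a d b] inner_L2_commute[of d b] by simp
    moreover have "inner_L2 (\<lambda>t. a t + d t) b \<le> norm_L2 (\<lambda>t. a t + d t) * norm_L2 b"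
      using L2_CS[OF ad b] by simp
    moreover have "c * norm_L2 b * norm_L2 d \<ge> 0"
      using c0 norm_L2_nonneg[of b] norm_L2_nonneg[of d] by simp
    ultimately have "c * norm_L2 a * norm_L2 b \<le> norm_L2 (\<lambda>t. a t + d t) * norm_L2 b"
      using ab bd by linarith
    then have "norm_L2 b \<le> K1 * norm_L2 (\<lambda>t. a t + d t)"
    proof (cases "norm_L2 b = 0")
      case True
      then show ?thesis using K10 norm_L2_nonneg[of "\<lambda>t. a t + d t"] by simp
    next
      case False
      then have bp: "norm_L2 b > 0" using norm_L2_nonneg[of b] by simp
      assume "c * norm_L2 a * norm_L2 b \<le> norm_L2 (\<lambda>t. a t + d t) * norm_L2 b"
      then have ca: "c * norm_L2 a \<le> norm_L2 (\<lambda>t. a t + d t)" using bp by simp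
      have "KP * norm_L2 a = K1 * (c * norm_L2 a)" using c0 by (simp add: K1_def)
      also have "\<dots> \<le> K1 * norm_L2 (\<lambda>t. a t + d t)" using ca K10 by (simp add: mult_left_mono)
      finally show ?thesis using bK by linarith
    qed
    then show ?thesis using te Ge by (simp add: b_def)
  qed
  have GL2p: "G e \<in> L2p \<and> norm_L2 (G e) \<le> K1 * norm_L2 e" if e: "e \<in> L2p" for e :: "'n signal"
  proof -
    have ee: "e \<in> L2ep" using L2p_L2ep[OF e] .
    have Gee: "G e \<in> L2ep" unfolding Gdef using sysPe loop[OF ee] by blast
    have "norm_L2 (trunc T (G e)) \<le> K1 * norm_L2 e" if T: "T \<ge> 0" for T
    proof -
      have "norm_L2 (trunc T (G e)) \<le> K1 * norm_L2 (trunc T e)" using key[OF ee T] .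
      also have "\<dots> \<le> K1 * norm_L2 e" using norm_L2_trunc_le[OF L2p_L2[OF e]] K10 by (simp add: mult_left_mono)
      finally show ?thesis .
    qed
    then show ?thesis using L2ep_complete[OF Gee] by blast
  qed
  have causalG: "causal G"
    unfolding causal_def
  proof (intro allI impI ballI)
    fix T :: real and e :: "'n signal" assume T: "T \<ge> 0" and e: "e \<in> L2ep"
    have te: "trunc T e \<in> L2ep" using L2p_L2ep[OF L2ep_trunc[OF e T]] .
    define u1 where "u1 = fst (F (e, \<lambda>t. 0))"
    define u1' where "u1' = fst (F (trunc T e, \<lambda>t. 0))"
    have u1: "u1 \<in> L2ep" using loop[OF e] by (simp add: u1_def)
    have u1': "u1' \<in> L2ep" using loop[OF te] by (simp add: u1'_def)
    have "trunc T (fst (F (e, \<lambda>t. 0))) = trunc T (fst (F (trunc T e, trunc T (\<lambda>t. 0))))"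
      using F e z0 T unfolding causal_inverse_fb_def by blast
    then have tu: "trunc T u1 = trunc T u1'"
      unfolding u1_def u1'_def trunc_zero .
    have "trunc T (G e) = trunc T (P u1)" by (simp add: Gdef u1_def)
    also have "\<dots> = trunc T (P (trunc T u1))" using stP u1 T unfolding stable_def causal_def by blast
    also have "\<dots> = trunc T (P (trunc T u1'))" by (simp add: tu)
    also have "\<dots> = trunc T (P u1')" using stP u1' T unfolding stable_def causal_def by metis
    also have "\<dots> = trunc T (G (trunc T e))" by (simp add: Gdef u1'_def)
    finally show "trunc T (G e) = trunc T (G (trunc T e))" .
  qed
  have stG: "stable G"
    unfolding stable_def
  proof (intro conjI ballI)
    show "causal G" by (rule causalG)
    show "G u \<in> L2p" if "u \<in> L2p" for u :: "'n signal" using GL2p[OF that] by blast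
    show "\<exists>K. \<forall>u\<in>L2p. norm_L2 u \<noteq> 0 \<longrightarrow> norm_L2 (G u) / norm_L2 u \<le> K"
    proof (intro exI[of _ K1] ballI impI)
      fix u :: "'n signal" assume u: "u \<in> L2p" and n: "norm_L2 u \<noteq> 0"
      then have "norm_L2 u > 0" using norm_L2_nonneg[of u] by simp
      then show "norm_L2 (G u) / norm_L2 u \<le> K1" using GL2p[OF u] by (simp add: divide_le_eq)
    qed
  qed
  have claim: "inner_L2 e (G e) \<ge> c * norm_L2 e * norm_L2 (G e) \<and> fst (F (e, \<lambda>t. 0)) \<in> L2p"
    if e: "e \<in> L2p" for e :: "'n signal"
  proof -
    have ee: "e \<in> L2ep" using L2p_L2ep[OF e] .
    define u1 where "u1 = fst (F (e, \<lambda>t. 0))"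
    have eu: "e = (\<lambda>t. u1 t + C (P u1) t)" using loop[OF ee] by (simp add: u1_def)
    have Ge: "G e = P u1" by (simp add: Gdef u1_def)
    have y1: "P u1 \<in> L2p" using GL2p[OF e] Ge by simp
    have Cy1: "C (P u1) \<in> L2p" using stC y1 unfolding stable_def by blast
    have "u1 = (\<lambda>t. e t - C (P u1) t)"
    proof
      fix t show "u1 t = e t - C (P u1) t" by (subst eu) simp
    qed
    then have u1: "u1 \<in> L2p" using L2p_diff[OF e Cy1] by simp
    have "inner_L2 e (P u1) = inner_L2 u1 (P u1) + inner_L2 (C (P u1)) (P u1)"
      by (subst eu) (rule inner_L2_add_left[OF L2p_L2[OF u1] L2p_L2[OF Cy1] L2p_L2[OF y1]])
    also have "\<dots> = inner_L2 u1 (P u1) + inner_L2 (P u1) (C (P u1))" by (simp add: inner_L2_commute)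
    finally have ie: "inner_L2 e (P u1) \<ge> c * norm_L2 u1 * norm_L2 (P u1) + c * norm_L2 (P u1) * norm_L2 (C (P u1))"
      using AP[OF u1] AC[OF y1] by linarith
    have ne: "norm_L2 e \<le> norm_L2 u1 + norm_L2 (C (P u1))"
      by (subst eu) (rule L2_norm_add_le[OF L2p_L2[OF u1] L2p_L2[OF Cy1]])
    have "c * norm_L2 (P u1) \<ge> 0" using c0 norm_L2_nonneg[of "P u1"] by simp
    then have "c * norm_L2 (P u1) * norm_L2 e \<le> c * norm_L2 (P u1) * (norm_L2 u1 + norm_L2 (C (P u1)))"
      using ne by (simp add: mult_left_mono)
    then have "c * norm_L2 e * norm_L2 (P u1) \<le> inner_L2 e (P u1)"
      using ie by (simp add: algebra_simps)
    then show ?thesis using Ge u1 by (simp add: u1_def)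
  qed
  define XG where "XG = {inner_L2 u (G u) / (norm_L2 u * norm_L2 (G u)) | u.
       u \<in> L2p \<and> norm_L2 u \<noteq> 0 \<and> norm_L2 (G u) \<noteq> 0}"
  define XP where "XP = {inner_L2 u (P u) / (norm_L2 u * norm_L2 (P u)) | u.
       u \<in> L2p \<and> norm_L2 u \<noteq> 0 \<and> norm_L2 (P u) \<noteq> 0}"
  have sG: "singular_angle G = arccos (Inf XG)" unfolding singular_angle_def XG_def ..
  have sP: "singular_angle P = arccos (Inf XP)" unfolding singular_angle_def XP_def ..
  have angG: "singular_angle G \<le> \<alpha>"
  proof (cases "XP = {}")
    case True
    have "XG = {}"
    proof (rule ccontr)
      assume "XG \<noteq> {}"
      then obtain e where e: "e \<in> L2p" and n1: "norm_L2 e \<noteq> 0" and n2: "norm_L2 (G e) \<noteq> 0"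
        unfolding XG_def by blast
      define u1 where "u1 = fst (F (e, \<lambda>t. 0))"
      have u1: "u1 \<in> L2p" using claim[OF e] by (simp add: u1_def)
      have Ge: "G e = P u1" by (simp add: Gdef u1_def)
      have "norm_L2 u1 \<noteq> 0"
      proof
        assume "norm_L2 u1 = 0"
        then have "norm_L2 (P u1) \<le> 0" using KP2[OF u1] by simp
        then show False using n2 Ge norm_L2_nonneg[of "P u1"] by simp
      qed
      then have "inner_L2 u1 (P u1) / (norm_L2 u1 * norm_L2 (P u1)) \<in> XP"
        using u1 n2 Ge unfolding XP_def by auto
      then show False using True by simp
    qed
    then show ?thesis using sG sP True saP by simp
  next
    case False
    then obtain v where v: "v \<in> L2p" and n1: "norm_L2 v \<noteq> 0" and n2: "norm_L2 (P v) \<noteq> 0"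
      unfolding XP_def by blast
    have vv: "v \<in> L2ep" using L2p_L2ep[OF v] .
    have Pv: "P v \<in> L2p" using stP v unfolding stable_def by blast
    have CPv: "C (P v) \<in> L2p" using stC Pv unfolding stable_def by blast
    define e where "e = (\<lambda>t. v t + C (P v) t)"
    have e: "e \<in> L2p" unfolding e_def using L2p_add[OF v CPv] .
    have fb: "fb_map P C (v, P v) = (e, \<lambda>t. 0)" by (simp add: fb_map_def e_def)
    have "F (fb_map P C (v, P v)) = (v, P v)"
      using F vv sysPe[OF vv] unfolding causal_inverse_fb_def by blast
    then have Ge: "G e = P v" using fb by (simp add: Gdef)
    have "inner_L2 e (P v) = inner_L2 v (P v) + inner_L2 (P v) (C (P v))"
      unfolding e_def using inner_L2_add_left[OF L2p_L2[OF v] L2p_L2[OF CPv] L2p_L2[OF Pv]]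
        inner_L2_commute[of "C (P v)" "P v"] by simp
    moreover have "inner_L2 (P v) (C (P v)) \<ge> 0"
    proof -
      have "0 \<le> c * norm_L2 (P v) * norm_L2 (C (P v))"
        using c0 norm_L2_nonneg[of "P v"] norm_L2_nonneg[of "C (P v)"] by simp
      then show ?thesis using AC[OF Pv] by linarith
    qed
    moreover have "c * norm_L2 v * norm_L2 (P v) > 0"
      using c0 n1 n2 norm_L2_nonneg[of v] norm_L2_nonneg[of "P v"] by (simp add: less_le)
    ultimately have ip: "inner_L2 e (P v) > 0" using AP[OF v] by linarith
    have ne: "norm_L2 e \<noteq> 0"
    proof
      assume "norm_L2 e = 0"
      then have "\<bar>inner_L2 e (P v)\<bar> \<le> 0" using L2_CS[OF L2p_L2[OF e] L2p_L2[OF Pv]] by simp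
      then show False using ip by simp
    qed
    have XGne: "XG \<noteq> {}" unfolding XG_def using e ne n2 Ge by auto
    have Xc: "c \<le> x" if "x \<in> XG" for x :: real
    proof -
      from that obtain u where x: "x = inner_L2 u (G u) / (norm_L2 u * norm_L2 (G u))" and u: "u \<in> L2p"
        and m1: "norm_L2 u \<noteq> 0" and m2: "norm_L2 (G u) \<noteq> 0" unfolding XG_def by blast
      have p: "norm_L2 u * norm_L2 (G u) > 0"
        using m1 m2 norm_L2_nonneg[of u] norm_L2_nonneg[of "G u"] by (simp add: less_le)
      have "c * (norm_L2 u * norm_L2 (G u)) \<le> inner_L2 u (G u)"
        using claim[OF u] by (simp add: mult.assoc)
      then show ?thesis unfolding x using p by (simp add: pos_le_divide_eq)
    qed
    have X1: "x \<le> 1" if "x \<in> XG" for x :: real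
    proof -
      from that obtain u where x: "x = inner_L2 u (G u) / (norm_L2 u * norm_L2 (G u))" and u: "u \<in> L2p"
        and m1: "norm_L2 u \<noteq> 0" and m2: "norm_L2 (G u) \<noteq> 0" unfolding XG_def by blast
      have "G u \<in> L2p" using GL2p[OF u] by blast
      then have "\<bar>x\<bar> \<le> 1" unfolding x using ratio_le1 u m1 m2 L2p_L2 by blast
      then show ?thesis by simp
    qed
    have I1: "c \<le> Inf XG" using XGne Xc by (rule cInf_greatest)
    obtain x0 where x0: "x0 \<in> XG" using XGne by blast
    have bdd: "bdd_below XG" using Xc by (intro bdd_belowI[where m=c]) auto
    have I2: "Inf XG \<le> 1" using cInf_lower[OF x0 bdd] X1[OF x0] by linarith
    have cle: "c \<le> 1" unfolding c_def by simp
    have "arccos (Inf XG) \<le> arccos c"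
      by (rule arccos_le_arccos) (use I1 I2 c0 in auto)
    also have "arccos c = \<alpha>" unfolding c_def using a0 api by (rule arccos_cos)
    finally show ?thesis using sG by simp
  qed
  have "stable G \<and> singular_angle G \<le> \<alpha>" using stG angG by blast
  then show ?thesis by (simp only: G_def)
qed

end
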